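(* The Thue–Morse word $t$ is uniformly abelian-square rich.
   Context: The Thue–Morse word $t=0110100110010110\cdots$ is the fixed point starting with $0$ of the substitution $\mu:0\mapsto 01,\ 1\mapsto 10$. An abelian square is a word $v_1v_2$ where $v_1$ and $v_2$ have the same number of occurrences of each letter. An infinite word $w$ is uniformly abelian-square rich if there is a constant $C>0$ such that for all sufficiently large $n$, every factor of $w$ of length $n$ has at least $Cn^2$ distinct factors that are abelian squares. *)

theory Defs
  imports "HOL-Library.Multiset" Complex_Main
begin

fun mu_letter :: "nat \<Rightarrow> nat list" where
  "mu_letter a = (if a = 0 then [0, 1] else [1, 0])"

definition mu :: "nat list \<Rightarrow> nat list" where
  "mu u = concat (map mu_letter u)"

text \<open>The Thue-Morse word t as an infinite word nat => nat: the fixed point of mu starting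
  with 0, i.e. the limit of the prefixes mu^k(0). Since mu^(n+1)(0) has length 2^(n+1) > n,
  its n-th letter is t(n).\<close>
definition thue_morse :: "nat \<Rightarrow> nat" where
  "thue_morse n = (mu ^^ Suc n) [0] ! n"

definition inf_factor :: "(nat \<Rightarrow> 'a) \<Rightarrow> nat \<Rightarrow> nat \<Rightarrow> 'a list" where
  "inf_factor w i n = map w [i..<i+n]"

definition factors :: "'a list \<Rightarrow> 'a list set" where
  "factors u = {v. \<exists>p s. u = p @ v @ s}"

definition abelian_square :: "'a list \<Rightarrow> bool" where
  "abelian_square v \<longleftrightarrow> v \<noteq> [] \<and>
     (\<exists>v1 v2. v = v1 @ v2 \<and> (\<forall>a. count_list v1 a = count_list v2 a))"

definition uniformly_abelian_square_rich :: "(nat \<Rightarrow> 'a) \<Rightarrow> bool" where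
  "uniformly_abelian_square_rich w \<longleftrightarrow>
     (\<exists>C::real. C > 0 \<and> (\<exists>N. \<forall>n\<ge>N. \<forall>i.
        real (card {v \<in> factors (inf_factor w i n). abelian_square v}) \<ge> C * (real n)^2))"

end

theory Submission
  imports Defs
begin

function tm :: "nat \<Rightarrow> nat" where
  "tm n = (if n = 0 then 0 else if even n then tm (n div 2) else 1 - tm (n div 2))"
  by auto
termination by (relation "measure id") auto

declare tm.simps[simp del]

lemma tm0[simp]: "tm 0 = 0"
  by (subst tm.simps) simp

lemma tm_le1: "tm n \<le> 1"
  by (induction n rule: tm.induct) (subst tm.simps, auto)

lemma tm_even[simp]: "tm (2*k) = tm k"
  by (subst tm.simps) auto

lemma tm_odd[simp]: "tm (Suc (2*k)) = 1 - tm k"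
  by (subst tm.simps) auto

lemma mu_length: "length (mu u) = 2 * length u"
  unfolding mu_def by (induction u) auto

lemma mu_nth: "i < 2 * length u \<Longrightarrow> mu u ! i = mu_letter (u ! (i div 2)) ! (i mod 2)"
proof (induction u arbitrary: i)
  case Nil then show ?case by simp
next
  case (Cons a u)
  have m: "mu (a # u) = mu_letter a @ mu u" unfolding mu_def by simp
  show ?case
  proof (cases "i < 2")
    case True
    then show ?thesis unfolding m by (auto simp: nth_append)
  next
    case False
    then obtain j where j: "i = Suc (Suc j)" by (metis add_2_eq_Suc le_add_diff_inverse not_less)
    have "j < 2 * length u" using Cons.prems j by simp
    from Cons.IH[OF this] show ?thesis unfolding m j
      by (simp add: nth_append)
  qed
qed

lemma mu_pow: "i < 2^k \<Longrightarrow> (mu ^^ k) [0] ! i = tm i"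
proof (induction k arbitrary: i)
  case 0 then show ?case by simp
next
  case (Suc k)
  have len: "length ((mu ^^ k) [0]) = 2^k"
    by (induction k) (auto simp: mu_length)
  have "(mu ^^ Suc k) [0] ! i = mu_letter ((mu ^^ k) [0] ! (i div 2)) ! (i mod 2)"
    using Suc.prems len by (simp add: mu_nth)
  also have "\<dots> = mu_letter (tm (i div 2)) ! (i mod 2)"
    using Suc.prems by (simp add: Suc.IH less_mult_imp_div_less)
  also have "\<dots> = tm i"
  proof -
    have r: "tm i = (if even i then tm (i div 2) else 1 - tm (i div 2))"
      by (cases "i = 0") (simp, subst tm.simps, simp)
    have "tm (i div 2) \<le> 1" by (rule tm_le1)
    then show ?thesis unfolding r
      by (cases "even i") (auto simp: odd_iff_mod_2_eq_one even_iff_mod_2_eq_zero)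
  qed
  finally show ?case .
qed

lemma thue_morse_tm: "thue_morse = tm"
proof
  fix n
  have "n < 2 ^ Suc n" by (metis less_exp lessI less_trans)
  then show "thue_morse n = tm n" unfolding thue_morse_def by (rule mu_pow)
qed

lemma tm_neq: "tm (Suc (2*k)) \<noteq> tm (2*k)"
  using tm_le1[of k] by simp presburger

lemma no_three: "tm y = tm (y+1) \<Longrightarrow> tm (y+1) = tm (y+2) \<Longrightarrow> False"
proof (cases "even y")
  case True
  then obtain k where k: "y = 2*k" by (rule evenE)
  assume "tm y = tm (y+1)"
  then have "tm (2*k) = tm (Suc (2*k))" using k by simp
  then show False using tm_neq[of k] by simp
next
  case False
  then have "y = Suc (2*(y div 2))" by presburger
  then obtain k where k: "y = Suc (2*k)" by blast
  then have e: "y + 1 = 2*(k+1)" "y + 2 = Suc (2*(k+1))" by simp_all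
  assume "tm (y+1) = tm (y+2)"
  then have "tm (2*(k+1)) = tm (Suc (2*(k+1)))" by (simp only: e)
  then show False using tm_neq[of "k+1"] by (simp only:)
qed

lemma odd_step:
  assumes "tm (2*j + (2*e+1)) = tm (2*j)" "tm (2*j+1 + (2*e+1)) = tm (2*j+1)"
  shows "tm (j+e) = tm (j+e+1)"
proof -
  have a: "2*j + (2*e+1) = Suc (2*(j+e))" "2*j+1 + (2*e+1) = 2*(j+e+1)" by simp_all
  have "1 - tm (j+e) = tm j" using assms(1) by (simp only: a tm_odd tm_even)
  moreover have "tm (j+e+1) = 1 - tm j" using assms(2) by (simp only: a tm_odd tm_even) (simp only: Suc_eq_plus1[symmetric] tm_odd)
  ultimately show ?thesis using tm_le1[of "j+e"] tm_le1[of j] by linarith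
qed

lemma no_period:
  "0 < d \<Longrightarrow> (\<forall>x. a \<le> x \<and> x \<le> b \<longrightarrow> tm (x+d) = tm x) \<Longrightarrow> b + 2 < a + 6*d"
proof (induction d arbitrary: a b rule: less_induct)
  case (less d)
  show ?case
  proof (cases "even d")
    case True
    then obtain e where e: "d = 2*e" by (rule evenE)
    with less.prems have e0: "0 < e" "e < d" by auto
    have "\<forall>j. (a+1) div 2 \<le> j \<and> j \<le> b div 2 \<longrightarrow> tm (j+e) = tm j"
    proof (intro allI impI)
      fix j assume j: "(a+1) div 2 \<le> j \<and> j \<le> b div 2"
      then have "a \<le> 2*j \<and> 2*j \<le> b" by linarith
      with less.prems(2) have "tm (2*j + d) = tm (2*j)" by blast
      moreover have "2*j + d = 2*(j+e)" using e by simp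
      ultimately show "tm (j+e) = tm j" by (simp only: tm_even)
    qed
    from less.IH[OF e0(2) e0(1) this] have "b div 2 + 2 < (a+1) div 2 + 6*e" .
    then show ?thesis using e by linarith
  next
    case False
    then have "d = 2*(d div 2) + 1" by presburger
    then obtain e where e: "d = 2*e+1" by blast
    show ?thesis
    proof (rule ccontr)
      assume "\<not> ?thesis"
      then have ab: "a + 4 \<le> b" using e by linarith
      define j where "j = (a+1) div 2"
      have j: "a \<le> 2*j" "2*j + 3 \<le> b" using ab unfolding j_def by linarith+
      have P: "tm (x + (2*e+1)) = tm x" if "a \<le> x" "x \<le> b" for x
        using less.prems(2) that e by blast
      have 1: "tm (j+e) = tm (j+e+1)"
        by (rule odd_step; rule P) (use j in auto)
      have 2: "tm ((j+1)+e) = tm ((j+1)+e+1)"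
        by (rule odd_step; rule P) (use j in auto)
      from no_three[of "j+e"] 1 2 show False by (simp add: algebra_simps)
    qed
  qed
qed

lemma count_pair: "count_list [tm (2*z), tm (Suc (2*z))] a = (if a \<le> 1 then 1 else 0)"
  using tm_le1[of z] by (cases "tm z") auto

lemma count_block: "count_list (map tm [2*y..<2*y+2*k]) a = k * (if a \<le> 1 then 1 else 0)"
proof (induction k)
  case 0 then show ?case by simp
next
  case (Suc k)
  have "[2*y..<2*y+2*Suc k] = [2*y..<2*y+2*k] @ [2*(y+k)..<2*(y+k)+2]"
    using upt_add_eq_append[of "2*y" "2*y+2*k" 2] by (simp add: algebra_simps)
  moreover have "[2*(y+k)..<2*(y+k)+2] = [2*(y+k), Suc (2*(y+k))]"
    by (simp add: numeral_2_eq_2)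
  ultimately have "map tm [2*y..<2*y+2*Suc k] = map tm [2*y..<2*y+2*k] @ [tm (2*(y+k)), tm (Suc (2*(y+k)))]"
    by simp
  then show ?case using Suc.IH count_pair[of "y+k" a] by (simp only: count_list_append) simp
qed

lemma abel: assumes "even x" "0 < m" shows "abelian_square (map tm [x..<x+4*m])"
proof -
  obtain y where y: "x = 2*y" using assms(1) by (rule evenE)
  have s: "[x..<x+4*m] = [2*y..<2*y+2*m] @ [2*(y+m)..<2*(y+m)+2*m]"
    using upt_add_eq_append[of "2*y" "2*y+2*m" "2*m"] y by (simp add: algebra_simps)
  show ?thesis unfolding abelian_square_def
  proof
    show "map tm [x..<x+4*m] \<noteq> []" using assms by simp
    show "\<exists>v1 v2. map tm [x..<x + 4 * m] = v1 @ v2 \<and> (\<forall>a. count_list v1 a = count_list v2 a)"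
      by (rule exI[of _ "map tm [2*y..<2*y+2*m]"], rule exI[of _ "map tm [2*(y+m)..<2*(y+m)+2*m]"])
         (simp only: s map_append count_block, simp)
  qed
qed

lemma in_factors: "i \<le> x \<Longrightarrow> x + L \<le> i + n \<Longrightarrow> map tm [x..<x+L] \<in> factors (inf_factor tm i n)"
proof -
  assume a: "i \<le> x" "x + L \<le> i + n"
  have "[i..<i+n] = [i..<x] @ [x..<x+L] @ [x+L..<i+n]"
    using a upt_add_eq_append[of i x "i+n-x"] upt_add_eq_append[of x "x+L" "i+n-(x+L)"]
    by simp
  then show ?thesis unfolding factors_def inf_factor_def by force
qed

lemma factors_finite: "finite (factors u)"
proof -
  have "factors u \<subseteq> {xs. set xs \<subseteq> set u \<and> length xs \<le> length u}"
    unfolding factors_def by auto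
  then show ?thesis using finite_lists_length_le[of "set u" "length u"] finite_subset by blast
qed

lemma distinct_pos:
  assumes "r < r'" "12 * (r' - r) \<le> 4*m + 1" "0 < m"
    and eq: "map tm [p+2*r..<p+2*r+4*m] = map tm [p+2*r'..<p+2*r'+4*m]"
  shows False
proof -
  define d where "d = 2*(r'-r)"
  have d0: "0 < d" using assms unfolding d_def by simp
  have "\<forall>x. p+2*r \<le> x \<and> x \<le> p+2*r+4*m-1 \<longrightarrow> tm (x+d) = tm x"
  proof (intro allI impI)
    fix x assume x: "p+2*r \<le> x \<and> x \<le> p+2*r+4*m-1"
    define k where "k = x - (p+2*r)"
    have k: "k < 4*m" "x = p+2*r+k" using x assms(3) unfolding k_def by auto
    have "map tm [p+2*r..<p+2*r+4*m] ! k = map tm [p+2*r'..<p+2*r'+4*m] ! k" using eq by simp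
    then have "tm (p+2*r+k) = tm (p+2*r'+k)" using k by simp
    moreover have "p+2*r'+k = x + d" using k assms(1) unfolding d_def by simp
    ultimately show "tm (x+d) = tm x" using k by simp
  qed
  from no_period[OF d0 this] have "p+2*r+4*m-1 + 2 < p+2*r + 6*d" .
  then show False using assms unfolding d_def by linarith
qed

lemma main_bound:
  assumes n: "10 \<le> n"
  shows "real n ^ 2 \<le> 1200 * real (card {v \<in> factors (inf_factor tm i n). abelian_square v})"
proof -
  define M where "M = n div 5"
  define x0 where "x0 = 2 * ((i+1) div 2)"
  define A where "A = {M div 2 + 1..M} \<times> {0..M div 6}"
  define f where "f = (\<lambda>(m, r). map tm [x0+2*r..<x0+2*r+4*m])"
  define S where "S = {v \<in> factors (inf_factor tm i n). abelian_square v}"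
  have inj: "inj_on f A"
  proof (rule inj_onI)
    fix a b assume ab: "a \<in> A" "b \<in> A" "f a = f b"
    obtain m r where a: "a = (m, r)" by fastforce
    obtain m' r' where b: "b = (m', r')" by fastforce
    have "length (f a) = length (f b)" using ab by simp
    then have mm: "m' = m" unfolding a b f_def by simp
    have m0: "0 < m" and r: "r \<le> M div 6" "r' \<le> M div 6" and mM: "M div 2 + 1 \<le> m"
      using ab(1,2) unfolding a b mm A_def by auto
    have "r = r'"
    proof (rule ccontr)
      assume "r \<noteq> r'"
      then consider "r < r'" | "r' < r" by linarith
      then show False
      proof cases
        case 1
        show False
          by (rule distinct_pos[OF 1 _ m0, of x0]) (use r mM ab(3) in \<open>auto simp: a b mm f_def\<close>)
      next
        case 2
        show False
          by (rule distinct_pos[OF 2 _ m0, of x0]) (use r mM ab(3) in \<open>auto simp: a b mm f_def\<close>)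
      qed
    qed
    then show "a = b" using a b mm by simp
  qed
  have sub: "f ` A \<subseteq> S"
  proof
    fix v assume "v \<in> f ` A"
    then obtain m r where mr: "(m, r) \<in> A" "v = f (m, r)" by auto
    have m: "0 < m" "m \<le> M" "r \<le> M div 6" using mr(1) unfolding A_def by auto
    have "i \<le> x0 + 2*r" "x0 + 2*r + 4*m \<le> i + n"
      using m n unfolding x0_def M_def by linarith+
    then have "v \<in> factors (inf_factor tm i n)" using mr(2) in_factors unfolding f_def by simp
    moreover have "abelian_square v" using mr(2) abel[of "x0+2*r" m] m unfolding f_def x0_def by simp
    ultimately show "v \<in> S" unfolding S_def by simp
  qed
  have fin: "finite S" unfolding S_def by (rule finite_subset[OF _ factors_finite]) auto
  have "card A \<le> card S"
    using card_image[OF inj] card_mono[OF fin sub] by simp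
  moreover have cA: "card A = (M - M div 2) * (M div 6 + 1)" unfolding A_def
    by (simp add: card_cartesian_product)
  moreover have "M \<le> 2 * (M - M div 2)" "M \<le> 6 * (M div 6 + 1)" "n \<le> 10 * M"
    using n unfolding M_def by presburger+
  ultimately have "n * n \<le> 1200 * card S"
  proof -
    assume h: "card A \<le> card S" "card A = (M - M div 2) * (M div 6 + 1)"
      "M \<le> 2 * (M - M div 2)" "M \<le> 6 * (M div 6 + 1)" "n \<le> 10 * M"
    have q: "M * M \<le> (2 * (M - M div 2)) * (6 * (M div 6 + 1))" by (rule mult_le_mono[OF h(3) h(4)])
    have q2: "(2 * (M - M div 2)) * (6 * (M div 6 + 1)) = 12 * card A" unfolding h(2) by (simp only: mult_ac)
    have "n * n \<le> (10*M) * (10*M)" by (rule mult_le_mono[OF h(5) h(5)])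
    also have "\<dots> = 100 * (M * M)" by simp
    also have "\<dots> \<le> 1200 * card A" using q q2 by simp
    also have "\<dots> \<le> 1200 * card S" using h(1) by simp
    finally show ?thesis .
  qed
  then have "real (n * n) \<le> real (1200 * card S)" by (simp only: of_nat_le_iff)
  then show ?thesis unfolding S_def by (simp add: power2_eq_square)
qed

theorem proposition2:
  shows "uniformly_abelian_square_rich thue_morse"
  unfolding uniformly_abelian_square_rich_def thue_morse_tm
proof (intro exI conjI allI impI)
  show "(0::real) < 1/1200" by simp
  fix n i :: nat assume "10 \<le> n"
  from main_bound[OF this, of i]
  show "1/1200 * real n ^ 2 \<le> real (card {v \<in> factors (inf_factor tm i n). abelian_square v})"
    by simp
qed

end
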